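(* Let $u,v,w,z,q,g,h,r\in\mathbb R$ and let $$F(y)=\begin{pmatrix}0&u&v\\ w&q&g+wy_2\\ z&h+uy_2&r+(v+z)y_2\end{pmatrix},\quad y\in\mathbb R^3,$$ and assume the symmetric part of $F$ is nondegenerate on the region considered. Then the torsion $H_{ijk}$ of $F$ vanishes identically, the Riemann tensor of the metric $G_{ij}$ vanishes identically, and every constant function $\Phi$ satisfies the one-loop vanishing $\beta$-function equations.
   Context: For a matrix-valued function $F_{ij}(y)$ on an open set of $\mathbb R^3$, set $G_{ij}=\tfrac12(F_{ij}+F_{ji})$ (metric, assumed nondegenerate, used to raise and lower indices), $B_{ij}=\tfrac12(F_{ij}-F_{ji})$, and $H_{ijk}=\partial_iB_{jk}+\partial_jB_{ki}+\partial_kB_{ij}$. Let $\nabla$ be the Levi-Civita connection of $G$, $R_{ij}$ its Ricci tensor and $R$ its scalar curvature. The one-loop vanishing $\beta$-function equations for a function $\Phi$ are: $0=R_{ij}-\nabla_i\nabla_j\Phi-\tfrac14H_{imn}H_j{}^{mn}$; $0=\nabla^k\Phi\,H_{kij}+\nabla^kH_{kij}$; $0=R-2\nabla_k\nabla^k\Phi-\nabla_k\Phi\nabla^k\Phi-\tfrac1{12}H_{kmn}H^{kmn}$. *)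

theory Defs
  imports "HOL-Analysis.Analysis"
begin

text \<open>Coordinates y = (y1,y2,y3) are written y $ 1, y $ 2, y $ 3 (index type 3).
  A matrix-valued field is F :: real^3 \<Rightarrow> real^3^3 with F y $ i $ j = F_ij(y).\<close>

type_synonym field3 = "real^3 \<Rightarrow> real^3^3"

definition pd :: "3 \<Rightarrow> (real^3 \<Rightarrow> real) \<Rightarrow> real^3 \<Rightarrow> real" where
  "pd i f y = deriv (\<lambda>t. f (y + t *\<^sub>R axis i 1)) 0"

definition Gm :: "field3 \<Rightarrow> real^3 \<Rightarrow> real^3^3" where
  "Gm F y = (\<chi> i j. (F y $ i $ j + F y $ j $ i) / 2)"

definition Bm :: "field3 \<Rightarrow> real^3 \<Rightarrow> real^3^3" where
  "Bm F y = (\<chi> i j. (F y $ i $ j - F y $ j $ i) / 2)"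

definition Hs :: "field3 \<Rightarrow> 3 \<Rightarrow> 3 \<Rightarrow> 3 \<Rightarrow> real^3 \<Rightarrow> real" where
  "Hs F i j k y = pd i (\<lambda>x. Bm F x $ j $ k) y + pd j (\<lambda>x. Bm F x $ k $ i) y
                 + pd k (\<lambda>x. Bm F x $ i $ j) y"

definition Ginv :: "field3 \<Rightarrow> real^3 \<Rightarrow> real^3^3" where
  "Ginv F y = matrix_inv (Gm F y)"

definition Chr :: "field3 \<Rightarrow> 3 \<Rightarrow> 3 \<Rightarrow> 3 \<Rightarrow> real^3 \<Rightarrow> real" where
  "Chr F l i j y = (\<Sum>m\<in>UNIV. Ginv F y $ l $ m *
      (pd i (\<lambda>x. Gm F x $ m $ j) y + pd j (\<lambda>x. Gm F x $ m $ i) y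
       - pd m (\<lambda>x. Gm F x $ i $ j) y)) / 2"

definition Riem :: "field3 \<Rightarrow> 3 \<Rightarrow> 3 \<Rightarrow> 3 \<Rightarrow> 3 \<Rightarrow> real^3 \<Rightarrow> real" where
  "Riem F l i j k y = pd j (Chr F l i k) y - pd k (Chr F l i j) y
     + (\<Sum>m\<in>UNIV. Chr F l j m y * Chr F m i k y - Chr F l k m y * Chr F m i j y)"

definition Ric :: "field3 \<Rightarrow> 3 \<Rightarrow> 3 \<Rightarrow> real^3 \<Rightarrow> real" where
  "Ric F i j y = (\<Sum>l\<in>UNIV. Riem F l i l j y)"

definition Scal :: "field3 \<Rightarrow> real^3 \<Rightarrow> real" where
  "Scal F y = (\<Sum>i\<in>UNIV. \<Sum>j\<in>UNIV. Ginv F y $ i $ j * Ric F i j y)"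

definition Hess :: "field3 \<Rightarrow> (real^3 \<Rightarrow> real) \<Rightarrow> 3 \<Rightarrow> 3 \<Rightarrow> real^3 \<Rightarrow> real" where
  "Hess F \<Phi> i j y = pd i (pd j \<Phi>) y - (\<Sum>k\<in>UNIV. Chr F k i j y * pd k \<Phi> y)"

definition gradU :: "field3 \<Rightarrow> (real^3 \<Rightarrow> real) \<Rightarrow> 3 \<Rightarrow> real^3 \<Rightarrow> real" where
  "gradU F \<Phi> k y = (\<Sum>l\<in>UNIV. Ginv F y $ k $ l * pd l \<Phi> y)"

definition covH :: "field3 \<Rightarrow> 3 \<Rightarrow> 3 \<Rightarrow> 3 \<Rightarrow> 3 \<Rightarrow> real^3 \<Rightarrow> real" where
  "covH F l k i j y = pd l (Hs F k i j) y
     - (\<Sum>a\<in>UNIV. Chr F a l k y * Hs F a i j y + Chr F a l i y * Hs F k a j y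
                  + Chr F a l j y * Hs F k i a y)"

definition Hup2 :: "field3 \<Rightarrow> 3 \<Rightarrow> 3 \<Rightarrow> 3 \<Rightarrow> real^3 \<Rightarrow> real" where
  "Hup2 F j m n y = (\<Sum>a\<in>UNIV. \<Sum>b\<in>UNIV. Ginv F y $ m $ a * Ginv F y $ n $ b * Hs F j a b y)"

definition beta_eqs :: "field3 \<Rightarrow> (real^3 \<Rightarrow> real) \<Rightarrow> real^3 \<Rightarrow> bool" where
  "beta_eqs F \<Phi> y \<longleftrightarrow>
    (\<forall>i j. Ric F i j y - Hess F \<Phi> i j y
            - (\<Sum>m\<in>UNIV. \<Sum>n\<in>UNIV. Hs F i m n y * Hup2 F j m n y) / 4 = 0) \<and>
    (\<forall>i j. (\<Sum>k\<in>UNIV. gradU F \<Phi> k y * Hs F k i j y)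
            + (\<Sum>k\<in>UNIV. \<Sum>l\<in>UNIV. Ginv F y $ k $ l * covH F l k i j y) = 0) \<and>
    (Scal F y - 2 * (\<Sum>i\<in>UNIV. \<Sum>j\<in>UNIV. Ginv F y $ i $ j * Hess F \<Phi> i j y)
       - (\<Sum>k\<in>UNIV. pd k \<Phi> y * gradU F \<Phi> k y)
       - (\<Sum>k\<in>UNIV. \<Sum>m\<in>UNIV. \<Sum>n\<in>UNIV. \<Sum>a\<in>UNIV.
            Hs F k m n y * Ginv F y $ k $ a * Hup2 F a m n y) / 12 = 0)"

definition Fex :: "real \<Rightarrow> real \<Rightarrow> real \<Rightarrow> real \<Rightarrow> real \<Rightarrow> real \<Rightarrow> real \<Rightarrow> real \<Rightarrow> field3" where
  "Fex u v w z q g h r = (\<lambda>y. vector [vector [0, u, v],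
                                       vector [w, q, g + w * y $ 2],
                                       vector [z, h + u * y $ 2, r + (v + z) * y $ 2]])"

end

theory Submission
  imports Defs
begin

lemma idx3_ne[simp]: "(1::3) \<noteq> 2" "(1::3) \<noteq> 3" "(2::3) \<noteq> 3" "(2::3) \<noteq> 1" "(3::3) \<noteq> 1" "(3::3) \<noteq> 2"
  by auto

lemma pd_fun2:
  assumes "\<forall>x. f x = \<phi> (x $ 2)" "(\<phi> has_real_derivative d) (at (y $ 2))"
  shows "pd i f y = (if i = 2 then d else 0)"
proof -
  have e: "(\<lambda>t. f (y + t *\<^sub>R axis i 1)) = (\<lambda>t. \<phi> (y $ 2 + t * (if i = 2 then 1 else 0)))"
    using assms(1) by (auto simp: axis_def)
  show ?thesis
  proof (cases "i = 2")
    case True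
    have g: "((\<lambda>t. y $ 2 + t) has_real_derivative 1) (at 0)"
      by (auto intro!: derivative_eq_intros)
    have d2: "(\<phi> has_real_derivative d) (at (y $ 2 + 0))" using assms(2) by simp
    have "((\<lambda>t. \<phi> (y $ 2 + t)) has_real_derivative d) (at 0)"
      using DERIV_chain2[OF d2 g] by simp
    then show ?thesis unfolding pd_def e using True by (simp add: DERIV_imp_deriv)
  next
    case False
    then show ?thesis unfolding pd_def e by simp
  qed
qed

lemma matrix_inv_eq:
  fixes A B :: "real^3^3"
  assumes "A ** B = mat 1" "B ** A = mat 1"
  shows "matrix_inv A = B"
proof -
  have ex: "\<exists>A'. A ** A' = mat 1 \<and> A' ** A = mat 1" using assms by blast
  let ?C = "matrix_inv A"
  have c: "A ** ?C = mat 1 \<and> ?C ** A = mat 1"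
    unfolding matrix_inv_def using someI_ex[OF ex] .
  have "?C = ?C ** (A ** B)" using assms by simp
  also have "\<dots> = (?C ** A) ** B" by (simp add: matrix_mul_assoc)
  also have "\<dots> = B" using c by simp
  finally show ?thesis .
qed

context fixes u v w z q g h r :: real
begin

definition "aa = (u+w)/2"
definition "bb = (v+z)/2"
definition "cc = (g+h)/2"
definition "Dl = 2 * aa * bb * cc - q * bb^2 -(aa^2) * r"

definition "G0 = (vector [vector [0, aa, bb], vector [aa, q, cc], vector [bb, cc, r]] :: real^3^3)"
definition "dG = (vector [vector [0, 0, 0], vector [0, 0, aa], vector [0, aa, 2*bb]] :: real^3^3)"
definition "P0 = (vector [vector [q*r - cc^2, bb*cc - aa*r, aa*cc - bb*q],
                          vector [bb*cc - aa*r, -(bb^2), aa*bb], vector [aa*cc - bb*q, aa*bb, -(aa^2)]] :: real^3^3)"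
definition "P1 = (vector [vector [2*q*bb - 2*aa*cc, - aa*bb, aa^2],
                          vector [- aa*bb, 0, 0], vector [aa^2, 0, 0]] :: real^3^3)"
definition "P2 = (vector [vector [-(aa^2), 0, 0], vector [0, 0, 0], vector [0, 0, 0]] :: real^3^3)"

lemma Gm_eq: "Gm (Fex u v w z q g h r) x = G0 + (x $ 2) *\<^sub>R dG"
  unfolding Gm_def Fex_def G0_def dG_def aa_def bb_def cc_def
  by (simp add: vec_eq_iff forall_3 field_simps)

lemma det_eq: "det (Gm (Fex u v w z q g h r) x) = Dl"
  unfolding Gm_eq det_3 G0_def dG_def Dl_def
  by (simp add: algebra_simps power2_eq_square)


definition "GinvE s = (1/Dl) *\<^sub>R (P0 + s *\<^sub>R P1 + s^2 *\<^sub>R P2)"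

lemma prod1: "(G0 + s *\<^sub>R dG) ** (P0 + s *\<^sub>R P1 + s^2 *\<^sub>R P2) = Dl *\<^sub>R mat 1"
  unfolding G0_def dG_def P0_def P1_def P2_def Dl_def
  by (simp add: vec_eq_iff forall_3 matrix_matrix_mult_def sum_3 mat_def algebra_simps power2_eq_square)

lemma prod2: "(P0 + s *\<^sub>R P1 + s^2 *\<^sub>R P2) ** (G0 + s *\<^sub>R dG) = Dl *\<^sub>R mat 1"
  unfolding G0_def dG_def P0_def P1_def P2_def Dl_def
  by (simp add: vec_eq_iff forall_3 matrix_matrix_mult_def sum_3 mat_def algebra_simps power2_eq_square)

lemma Ginv_eq:
  assumes "Dl \<noteq> 0"
  shows "Ginv (Fex u v w z q g h r) x = GinvE (x $ 2)"
  unfolding Ginv_def Gm_eq GinvE_def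
  apply (rule matrix_inv_eq)
  using assms by (simp_all add: matrix_scalar_ac scalar_matrix_assoc[symmetric] prod1 prod2)

lemma pdGm: "pd k (\<lambda>x. Gm (Fex u v w z q g h r) x $ m $ j) y = (if k = 2 then dG $ m $ j else 0)"
  by (rule pd_fun2[where \<phi>="\<lambda>s. G0 $ m $ j + s * dG $ m $ j"]) (auto simp: Gm_eq intro!: derivative_eq_intros)

definition "cst m i j = (if i = 2 then dG$m$j else 0) + (if j = 2 then dG$m$i else 0) - (if m = 2 then dG$i$j else 0)"
definition "ChrE l i j s = (\<Sum>m\<in>UNIV. GinvE s $ l $ m * cst m i j) / 2"
definition "dChrE l i j s = (\<Sum>m\<in>UNIV. ((P1$l$m + 2 * s * P2$l$m) / Dl) * cst m i j) / 2"

lemma Chr_eq: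
  assumes "Dl \<noteq> 0"
  shows "Chr (Fex u v w z q g h r) l i j x = ChrE l i j (x $ 2)"
  unfolding Chr_def ChrE_def pdGm Ginv_eq[OF assms] cst_def
  by (simp add: algebra_simps)

lemma ChrE_deriv: assumes "Dl \<noteq> 0" shows "(ChrE l i j has_real_derivative dChrE l i j s) (at s)"
  unfolding ChrE_def dChrE_def GinvE_def sum_3
  using assms by (auto intro!: derivative_eq_intros simp: field_simps power2_eq_square)

lemma pdChr:
  assumes "Dl \<noteq> 0"
  shows "pd k (Chr (Fex u v w z q g h r) l i j) y = (if k = 2 then dChrE l i j (y$2) else 0)"
  by (rule pd_fun2[where \<phi>="ChrE l i j"]) (auto simp: Chr_eq[OF assms] ChrE_deriv[OF assms])


lemma Riem_zero:
  assumes "Dl \<noteq> 0"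
  shows "\<forall>l i j k. Riem (Fex u v w z q g h r) l i j k y = 0"
  unfolding Riem_def pdChr[OF assms] Chr_eq[OF assms]
  unfolding ChrE_def dChrE_def GinvE_def cst_def sum_3 P0_def P1_def P2_def dG_def forall_3
  apply simp
  apply (simp add: field_simps power2_eq_square assms)
  apply (simp add: Dl_def algebra_simps power2_eq_square eval_nat_numeral)
  done

definition "B0 = (vector [vector [0, (u-w)/2, (v-z)/2], vector [(w-u)/2, 0, (g-h)/2], vector [(z-v)/2, (h-g)/2, 0]] :: real^3^3)"
definition "dB = (vector [vector [0, 0, 0], vector [0, 0, (w-u)/2], vector [0, (u-w)/2, 0]] :: real^3^3)"

lemma Bm_eq: "Bm (Fex u v w z q g h r) x = B0 + (x $ 2) *\<^sub>R dB"
  unfolding Bm_def Fex_def B0_def dB_def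
  by (simp add: vec_eq_iff forall_3 field_simps)

lemma pdBm: "pd k (\<lambda>x. Bm (Fex u v w z q g h r) x $ m $ j) y = (if k = 2 then dB $ m $ j else 0)"
  by (rule pd_fun2[where \<phi>="\<lambda>s. B0 $ m $ j + s * dB $ m $ j"]) (auto simp: Bm_eq intro!: derivative_eq_intros)

lemma Hs_zero: "Hs (Fex u v w z q g h r) i j k y = 0"
proof -
  have "\<forall>i j k. Hs (Fex u v w z q g h r) i j k y = 0"
    unfolding Hs_def pdBm dB_def forall_3 by (simp add: field_simps)
  then show ?thesis by blast
qed

end

theorem mainTheorem8:
  fixes u v w z q g h r :: real and U :: "(real^3) set"
  assumes "open U"
    and "\<forall>y\<in>U. det (Gm (Fex u v w z q g h r) y) \<noteq> 0"
  shows "\<forall>y\<in>U.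
      (\<forall>i j k. Hs (Fex u v w z q g h r) i j k y = 0) \<and>
      (\<forall>l i j k. Riem (Fex u v w z q g h r) l i j k y = 0) \<and>
      (\<forall>c::real. beta_eqs (Fex u v w z q g h r) (\<lambda>_. c) y)"
proof
  fix y assume yU: "y \<in> U"
  let ?F = "Fex u v w z q g h r"
  have dn: "det (Gm ?F y) \<noteq> 0" using assms(2) yU by blast
  have R: "\<forall>l i j k. Riem ?F l i j k x = 0" for x
    by (rule Riem_zero[OF dn[unfolded det_eq]])
  have R': "Riem ?F l i j k x = 0" for l i j k x using R by blast
  have H: "Hs ?F i j k = (\<lambda>_. 0)" for i j k by (rule ext) (rule Hs_zero)
  have Hy: "Hs ?F i j k x = 0" for i j k x by (simp add: H)
  have P: "pd i (\<lambda>_. c) = (\<lambda>_. 0)" for i and c :: real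
    by (rule ext) (simp add: pd_def)
  show "(\<forall>i j k. Hs ?F i j k y = 0) \<and> (\<forall>l i j k. Riem ?F l i j k y = 0) \<and>
      (\<forall>c::real. beta_eqs ?F (\<lambda>_. c) y)"
    unfolding beta_eqs_def Hess_def gradU_def covH_def Hup2_def Scal_def Ric_def
    by (simp add: Hy R' H P)
qed

end
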